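(* Let $n\ge 2$ and let $U$ be the transition matrix of the Grover walk on the complete graph $K_n$. Then there is a real scalar $t$ such that $U^2=\exp\big(t\,S(\mathrm{LD}(K_n))\big)$.
   Context: For a $k$-regular graph $X$, each edge $\{a,b\}$ is replaced by arcs $(a,b)$ and $(b,a)$. The line digraph $\mathrm{LD}(X)$ has the arcs as vertices, with an arc from $(a,b)$ to $(c,d)$ iff $b=c$; $A(\mathrm{LD}(X))$ is its $01$-adjacency matrix. $R$ is the permutation matrix on arcs mapping $(a,b)$ to $(b,a)$. The transition matrix of the Grover walk is $U=\frac{2}{k}A(\mathrm{LD}(X))-R$ (here $k=n-1$). For a digraph $Z$ with $01$-adjacency matrix $A(Z)$, its skew-adjacency matrix is $S(Z)=A(Z)-A(Z)^T$. *)

theory Defs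
  imports Complex_Main
begin

text \<open>Matrices indexed by a finite set I of indices are represented as functions
  'i \<Rightarrow> 'i \<Rightarrow> real which vanish outside I \<times> I.\<close>

definition mmult :: "'i set \<Rightarrow> ('i \<Rightarrow> 'i \<Rightarrow> real) \<Rightarrow> ('i \<Rightarrow> 'i \<Rightarrow> real) \<Rightarrow> 'i \<Rightarrow> 'i \<Rightarrow> real" where
  "mmult I A B = (\<lambda>x y. \<Sum>z\<in>I. A x z * B z y)"

definition mident :: "'i set \<Rightarrow> 'i \<Rightarrow> 'i \<Rightarrow> real" where
  "mident I = (\<lambda>x y. if x \<in> I \<and> x = y then 1 else 0)"

fun mpow :: "'i set \<Rightarrow> ('i \<Rightarrow> 'i \<Rightarrow> real) \<Rightarrow> nat \<Rightarrow> 'i \<Rightarrow> 'i \<Rightarrow> real" where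
  "mpow I A 0 = mident I"
| "mpow I A (Suc k) = mmult I (mpow I A k) A"

definition mexp :: "'i set \<Rightarrow> ('i \<Rightarrow> 'i \<Rightarrow> real) \<Rightarrow> 'i \<Rightarrow> 'i \<Rightarrow> real" where
  "mexp I A = (\<lambda>x y. (\<Sum>k. mpow I A k x y / fact k))"

text \<open>A graph is given by a vertex set V and a symmetric edge relation E;
  arcs are the ordered pairs (a,b) with {a,b} an edge.\<close>
definition arcs :: "'a set \<Rightarrow> ('a \<Rightarrow> 'a \<Rightarrow> bool) \<Rightarrow> ('a \<times> 'a) set" where
  "arcs V E = {(a,b). a \<in> V \<and> b \<in> V \<and> E a b}"

definition LD_adj :: "'a set \<Rightarrow> ('a \<Rightarrow> 'a \<Rightarrow> bool) \<Rightarrow> ('a \<times> 'a) \<Rightarrow> ('a \<times> 'a) \<Rightarrow> real" where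
  "LD_adj V E = (\<lambda>x y. if x \<in> arcs V E \<and> y \<in> arcs V E \<and> snd x = fst y then 1 else 0)"

definition arc_rev :: "'a set \<Rightarrow> ('a \<Rightarrow> 'a \<Rightarrow> bool) \<Rightarrow> ('a \<times> 'a) \<Rightarrow> ('a \<times> 'a) \<Rightarrow> real" where
  "arc_rev V E = (\<lambda>x y. if x \<in> arcs V E \<and> y \<in> arcs V E \<and> y = (snd x, fst x) then 1 else 0)"

text \<open>Grover walk transition matrix U = (2/k) A(LD(X)) - R for a k-regular graph.\<close>
definition grover :: "real \<Rightarrow> 'a set \<Rightarrow> ('a \<Rightarrow> 'a \<Rightarrow> bool) \<Rightarrow> ('a \<times> 'a) \<Rightarrow> ('a \<times> 'a) \<Rightarrow> real" where
  "grover k V E = (\<lambda>x y. 2 / k * LD_adj V E x y - arc_rev V E x y)"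

definition skew :: "('i \<Rightarrow> 'i \<Rightarrow> real) \<Rightarrow> 'i \<Rightarrow> 'i \<Rightarrow> real" where
  "skew A = (\<lambda>x y. A x y - A y x)"

definition Kn_V :: "nat \<Rightarrow> nat set" where "Kn_V n = {0..<n}"
definition Kn_E :: "nat \<Rightarrow> nat \<Rightarrow> bool" where "Kn_E a b = (a \<noteq> b)"

end

theory Submission
  imports Defs
begin


abbreviation "Ar n \<equiv> arcs (Kn_V n) Kn_E"

lemma mem_Ar: "(a,b) \<in> Ar n \<longleftrightarrow> a < n \<and> b < n \<and> a \<noteq> b"
  by (auto simp: arcs_def Kn_V_def Kn_E_def)

lemma finite_Ar: "finite (Ar n)"
proof -
  have "Ar n \<subseteq> {0..<n} \<times> {0..<n}" by (auto simp: arcs_def Kn_V_def)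
  thus ?thesis by (rule finite_subset) auto
qed

lemma sum_fst:
  assumes "b < n"
  shows "(\<Sum>z\<in>Ar n. if fst z = b then G z else 0) = (\<Sum>w\<in>{0..<n}-{b}. G (b,w))"
proof -
  have "(\<Sum>z\<in>Ar n. if fst z = b then G z else 0) = (\<Sum>z\<in>{z\<in>Ar n. fst z = b}. G z)"
    by (simp add: sum.inter_filter finite_Ar)
  also have "{z\<in>Ar n. fst z = b} = (\<lambda>w. (b,w)) ` ({0..<n}-{b})"
    using assms by (auto simp: arcs_def Kn_V_def Kn_E_def)
  also have "(\<Sum>z\<in>(\<lambda>w. (b,w)) ` ({0..<n}-{b}). G z) = (\<Sum>w\<in>{0..<n}-{b}. G (b,w))"
    by (subst sum.reindex) (auto simp: inj_on_def)
  finally show ?thesis .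
qed

lemma sum_snd:
  assumes "a < n"
  shows "(\<Sum>z\<in>Ar n. if snd z = a then G z else 0) = (\<Sum>u\<in>{0..<n}-{a}. G (u,a))"
proof -
  have "(\<Sum>z\<in>Ar n. if snd z = a then G z else 0) = (\<Sum>z\<in>{z\<in>Ar n. snd z = a}. G z)"
    by (simp add: sum.inter_filter finite_Ar)
  also have "{z\<in>Ar n. snd z = a} = (\<lambda>u. (u,a)) ` ({0..<n}-{a})"
    using assms by (auto simp: arcs_def Kn_V_def Kn_E_def)
  also have "(\<Sum>z\<in>(\<lambda>u. (u,a)) ` ({0..<n}-{a}). G z) = (\<Sum>u\<in>{0..<n}-{a}. G (u,a))"
    by (subst sum.reindex) (auto simp: inj_on_def)
  finally show ?thesis .
qed

abbreviation "SS n \<equiv> skew (LD_adj (Kn_V n) Kn_E)"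

lemma SS_entry: "SS n x y = (if x \<in> Ar n \<and> y \<in> Ar n then
    (if snd x = fst y then 1 else 0) - (if snd y = fst x then 1 else 0) else 0)"
  by (auto simp: skew_def LD_adj_def)

lemma mmult_SS:
  assumes "(a,b) \<in> Ar n"
  shows "mmult (Ar n) (SS n) F (a,b) y = (\<Sum>w\<in>{0..<n}-{b}. F (b,w) y) - (\<Sum>u\<in>{0..<n}-{a}. F (u,a) y)" (is "_ = ?rhs")
proof -
  have "mmult (Ar n) (SS n) F (a,b) y = (\<Sum>z\<in>Ar n. (if fst z = b then F z y else 0) - (if snd z = a then F z y else 0))"
    unfolding mmult_def using assms
    by (intro sum.cong) (auto simp: SS_entry)
  also have "\<dots> = (\<Sum>z\<in>Ar n. (if fst z = b then F z y else 0)) - (\<Sum>z\<in>Ar n. if snd z = a then F z y else 0)"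
    by (simp add: sum_subtractf)
  also have "\<dots> = ?rhs" using assms by (simp add: sum_fst sum_snd mem_Ar)
  finally show ?thesis .
qed

lemma sum_delta_V: "(\<Sum>w\<in>{0..<n}-{b}. (if w = (c::nat) then (1::real) else 0)) = (if c < n \<and> c \<noteq> b then 1 else 0)"
  by (subst sum.delta) auto

lemma card_Vb: "b < n \<Longrightarrow> card ({0..<n}-{b}) = n - 1"
  by simp

lemma sum_lin:
  fixes b c d n :: nat and \<alpha> \<beta> \<gamma> :: real
  assumes "b < n"
  shows "(\<Sum>w\<in>{0..<n}-{b}. \<alpha> + \<beta>*(if w = c then 1 else 0) + \<gamma>*(if w = d then 1 else 0))
    = \<alpha>*real(n-1) + \<beta>*(if c<n \<and> c\<noteq>b then 1 else 0) + \<gamma>*(if d<n \<and> d\<noteq>b then 1 else 0)"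
  using assms by (simp add: sum.distrib sum_distrib_left[symmetric] sum_delta_V)

abbreviation "S2 n \<equiv> mmult (Ar n) (SS n) (SS n)"

lemma S2_entry:
  assumes x: "(a,b) \<in> Ar n" and y: "(c,d) \<in> Ar n"
  shows "S2 n (a,b) (c,d) = (if c \<noteq> b then 1 else 0) - real(n-1)*(if d = b then 1 else 0)
     - real(n-1)*(if a = c then 1 else 0) + (if d \<noteq> a then 1 else 0)"
proof -
  from x y have ab: "a<n" "b<n" "a\<noteq>b" "c<n" "d<n" "c\<noteq>d" by (auto simp: mem_Ar)
  have 1: "(\<Sum>w\<in>{0..<n}-{b}. SS n (b,w) (c,d)) = (\<Sum>w\<in>{0..<n}-{b}. (- (if d = b then 1 else 0)) + 1*(if w = c then 1 else 0) + 0*(if w = d then 1 else 0))"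
    using ab by (intro sum.cong) (auto simp: SS_entry mem_Ar)
  have 2: "(\<Sum>u\<in>{0..<n}-{a}. SS n (u,a) (c,d)) = (\<Sum>u\<in>{0..<n}-{a}. (if a = c then 1 else 0) + 0*(if u = c then 1 else 0) + (-1)*(if u = d then 1 else 0))"
    using ab by (intro sum.cong) (auto simp: SS_entry mem_Ar)
  show ?thesis using ab
    by (simp only: mmult_SS[OF x] 1 2 sum_lin) (auto simp: algebra_simps)
qed

lemma mmult_assoc:
  assumes "finite I"
  shows "mmult I (mmult I A B) C = mmult I A (mmult I B C)"
  unfolding mmult_def
  by (auto simp: sum_distrib_left sum_distrib_right mult.assoc intro!: ext sum.swap)

lemma mmult_zero_row: "(\<And>z. A x z = 0) \<Longrightarrow> mmult I A B x y = 0"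
  by (simp add: mmult_def)
lemma mmult_zero_col: "(\<And>z. B z y = 0) \<Longrightarrow> mmult I A B x y = 0"
  by (simp add: mmult_def)

lemma SS_out: "x \<notin> Ar n \<or> y \<notin> Ar n \<Longrightarrow> SS n x y = 0"
  by (auto simp: SS_entry)

lemma S3_entry:
  assumes x: "(a,b) \<in> Ar n" and y: "(c,d) \<in> Ar n"
  shows "mmult (Ar n) (SS n) (S2 n) (a,b) (c,d) = - ((real(n-1))^2 - 1) * SS n (a,b) (c,d)"
proof -
  from x y have ab: "a<n" "b<n" "a\<noteq>b" "c<n" "d<n" "c\<noteq>d" by (auto simp: mem_Ar)
  define k where "k = real (n-1)"
  have 1: "(\<Sum>w\<in>{0..<n}-{b}. S2 n (b,w) (c,d)) = (\<Sum>w\<in>{0..<n}-{b}. (1 - k*(if b = c then 1 else 0) + (if d \<noteq> b then 1 else 0)) + (-1)*(if w = c then 1 else 0) + (-k)*(if w = d then 1 else 0))"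
    using ab by (intro sum.cong) (auto simp: S2_entry mem_Ar k_def)
  have 2: "(\<Sum>u\<in>{0..<n}-{a}. S2 n (u,a) (c,d)) = (\<Sum>u\<in>{0..<n}-{a}. ((if c \<noteq> a then 1 else 0) - k*(if d = a then 1 else 0) + 1) + (-k)*(if u = c then 1 else 0) + (-1)*(if u = d then 1 else 0))"
    using ab by (intro sum.cong) (auto simp: S2_entry mem_Ar k_def)
  show ?thesis using ab x y
    by (simp only: mmult_SS[OF x] 1 2 sum_lin flip: k_def) (auto simp: algebra_simps SS_entry power2_eq_square)
qed

lemma S3:
  "mmult (Ar n) (S2 n) (SS n) = (\<lambda>x y. - ((real(n-1))^2 - 1) * SS n x y)"
proof (intro ext)
  fix x y
  show "mmult (Ar n) (S2 n) (SS n) x y = - ((real(n-1))^2 - 1) * SS n x y"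
  proof (cases "x \<in> Ar n \<and> y \<in> Ar n")
    case True
    then obtain a b c d where "x = (a,b)" "y = (c,d)" by (cases x, cases y) auto
    then show ?thesis using True S3_entry[of a b n c d] by (simp add: mmult_assoc finite_Ar)
  next
    case False
    hence "x \<notin> Ar n \<or> y \<notin> Ar n" by blast
    moreover have "S2 n x z = 0" if "x \<notin> Ar n" for z
      using that by (intro mmult_zero_row) (simp add: SS_out)
    ultimately show ?thesis
      by (auto simp: mmult_def SS_out)
  qed
qed

definition "UU n = grover (real (n - 1)) (Kn_V n) Kn_E"

lemma UU_entry: "UU n x y = (if x \<in> Ar n \<and> y \<in> Ar n then
    2 / real (n-1) * (if snd x = fst y then 1 else 0) - (if y = (snd x, fst x) then 1 else 0) else 0)"
  by (auto simp: UU_def grover_def LD_adj_def arc_rev_def)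

lemma mmult_UU:
  assumes "(a,b) \<in> Ar n"
  shows "mmult (Ar n) (UU n) F (a,b) y = 2 / real (n-1) * (\<Sum>w\<in>{0..<n}-{b}. F (b,w) y) - F (b,a) y" (is "_ = ?rhs")
proof -
  have ba: "(b,a) \<in> Ar n" using assms by (auto simp: mem_Ar)
  have "mmult (Ar n) (UU n) F (a,b) y = (\<Sum>z\<in>Ar n. 2 / real (n-1) * (if fst z = b then F z y else 0) - (if z = (b,a) then F z y else 0))"
    unfolding mmult_def using assms
    by (intro sum.cong) (auto simp: UU_entry left_diff_distrib)
  also have "\<dots> = 2 / real (n-1) * (\<Sum>z\<in>Ar n. (if fst z = b then F z y else 0)) - (\<Sum>z\<in>Ar n. if z = (b,a) then F z y else 0)"
    by (simp add: sum_subtractf sum_distrib_left)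
  also have "\<dots> = ?rhs" using assms ba by (simp add: sum_fst mem_Ar left_diff_distrib sum.delta[OF finite_Ar])
  finally show ?thesis .
qed

lemma U2_entry:
  assumes x: "(a,b) \<in> Ar n" and y: "(c,d) \<in> Ar n"
  shows "mmult (Ar n) (UU n) (UU n) (a,b) (c,d) = mident (Ar n) (a,b) (c,d)
     - 2 / (real(n-1))^2 * SS n (a,b) (c,d) + 2 / (real(n-1))^2 * S2 n (a,b) (c,d)"
proof -
  from x y have ab: "a<n" "b<n" "a\<noteq>b" "c<n" "d<n" "c\<noteq>d" by (auto simp: mem_Ar)
  hence n2: "n \<ge> 2" by auto
  define k where "k = real (n-1)"
  have kpos: "k > 0" using n2 by (simp add: k_def)
  have rn: "real n = k + 1" using n2 by (simp add: k_def)
  have 1: "(\<Sum>w\<in>{0..<n}-{b}. UU n (b,w) (c,d)) = (\<Sum>w\<in>{0..<n}-{b}. 0 + (2/k - (if d = b then 1 else 0))*(if w = c then 1 else 0) + 0*(if w = d then 1 else 0))"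
    using ab by (intro sum.cong) (auto simp: UU_entry mem_Ar k_def)
  show ?thesis using ab x y kpos
    by (simp only: mmult_UU[OF x] 1 sum_lin S2_entry flip: k_def)
       (auto simp: UU_entry mident_def SS_entry mem_Ar field_simps power2_eq_square rn)
qed



lemma mexp_formula:
  fixes I :: "'i set" and S :: "'i \<Rightarrow> 'i \<Rightarrow> real" and s \<theta> :: real
  assumes fin: "finite I"
    and Sout: "\<And>x y. x \<notin> I \<Longrightarrow> S x y = 0"
    and S3: "mmult I (mmult I S S) S = (\<lambda>x y. - (s^2) * S x y)"
    and spos: "s > 0"
  shows "mexp I (\<lambda>x y. (\<theta>/s) * S x y) = (\<lambda>x y. mident I x y + (sin \<theta> / s) * S x y
            + ((1 - cos \<theta>) / s^2) * mmult I S S x y)"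
proof -
  define t where "t = \<theta>/s"
  define S2 where "S2 = mmult I S S"
  define F :: "nat \<Rightarrow> real" where "F k = (if k = 0 then 1 else 0)" for k
  define G where "G k = sin_coeff k * \<theta>^k / s" for k
  define H where "H k = (if k = 0 then 0 else - cos_coeff k * \<theta>^k / s^2)" for k
  have IdS: "mmult I (mident I) S x y = S x y" for x y
  proof (cases "x \<in> I")
    case True
    have "mmult I (mident I) S x y = (\<Sum>z\<in>I. if x = z then S z y else 0)"
      unfolding mmult_def mident_def using True by (intro sum.cong) auto
    also have "\<dots> = S x y" using True by (simp add: fin)
    finally show ?thesis .
  qed (simp add: mmult_def mident_def Sout)
  have S3': "mmult I S2 S x y = - (s^2) * S x y" for x y
    using S3 unfolding S2_def by metis
  have G1: "fact (Suc k) * G (Suc k) = fact k * cos_coeff k * \<theta>^k * t" for k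
  proof -
    have "fact (Suc k) * G (Suc k) = (real (Suc k) * fact k) * (cos_coeff k / real (Suc k) * (\<theta>^k * \<theta>) / s)"
      by (simp only: G_def sin_coeff_Suc fact_Suc power_Suc2 of_nat_mult)
    also have "\<dots> = fact k * cos_coeff k * \<theta>^k * t"
      by (simp add: t_def field_simps del: of_nat_Suc)
    finally show ?thesis .
  qed
  have rec1: "fact k * t * (F k - s^2 * H k) = fact (Suc k) * G (Suc k)" for k
    unfolding G1 using spos by (auto simp: F_def H_def cos_coeff_def)
  have rec2: "fact k * t * G k = fact (Suc k) * H (Suc k)" for k
  proof -
    have "fact (Suc k) * H (Suc k) = (real (Suc k) * fact k) * (- (- sin_coeff k / real (Suc k)) * (\<theta>^k * \<theta>) / s^2)"
      by (simp only: H_def cos_coeff_Suc fact_Suc power_Suc2 of_nat_mult) simp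
    also have "\<dots> = fact k * t * G k"
      using spos by (simp add: t_def G_def field_simps power2_eq_square del: of_nat_Suc)
    finally show ?thesis by simp
  qed
  have pw: "mpow I (\<lambda>x y. t * S x y) k x y = fact k * (F k * mident I x y + G k * S x y + H k * S2 x y)" for k x y
  proof (induction k arbitrary: x y)
    case 0
    then show ?case by (simp add: F_def G_def H_def)
  next
    case (Suc k)
    have "mpow I (\<lambda>x y. t * S x y) (Suc k) x y
       = (\<Sum>z\<in>I. fact k * (F k * mident I x z + G k * S x z + H k * S2 x z) * (t * S z y))"
      by (simp add: mmult_def Suc)
    also have "\<dots> = fact k * t * F k * mmult I (mident I) S x y + fact k * t * G k * S2 x y
        + fact k * t * H k * mmult I S2 S x y"
      by (simp add: mmult_def S2_def sum.distrib sum_distrib_left algebra_simps)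
    also have "\<dots> = (fact k * t * (F k - s^2 * H k)) * S x y + (fact k * t * G k) * S2 x y"
      by (simp add: IdS S3' algebra_simps)
    also have "\<dots> = fact (Suc k) * (F (Suc k) * mident I x y + G (Suc k) * S x y + H (Suc k) * S2 x y)"
      by (simp only: rec1 rec2) (simp add: F_def algebra_simps)
    finally show ?case .
  qed
  have sG: "(\<lambda>k. G k) sums (sin \<theta> / s)"
    unfolding G_def using sums_divide[OF sin_converges[of \<theta>], of s] by simp
  have sH: "(\<lambda>k. H k) sums ((1 - cos \<theta>) / s^2)"
  proof -
    have "(\<lambda>k. ((if k = 0 then 1 else 0) - cos_coeff k * \<theta>^k) / s^2) sums ((1 - cos \<theta>)/s^2)"
      by (intro sums_divide sums_diff) (auto simp: cos_converges[of \<theta>, simplified] sums_single[of 0 "\<lambda>_. 1::real", simplified])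
    moreover have "(\<lambda>k. ((if k = 0 then 1 else 0) - cos_coeff k * \<theta>^k) / s^2) = H"
      by (auto simp: H_def cos_coeff_def fun_eq_iff)
    ultimately show ?thesis by simp
  qed
  have sF: "F sums 1"
    unfolding F_def using sums_single[of 0 "\<lambda>_. 1::real"] by simp
  show ?thesis
  proof (intro ext)
    fix x y
    have "(\<lambda>k. mpow I (\<lambda>x y. t * S x y) k x y / fact k) = (\<lambda>k. F k * mident I x y + G k * S x y + H k * S2 x y)"
      by (simp add: pw)
    moreover have "(\<lambda>k. F k * mident I x y + G k * S x y + H k * S2 x y) sums
       (1 * mident I x y + (sin \<theta> / s) * S x y + ((1 - cos \<theta>) / s^2) * S2 x y)"
      by (intro sums_add sums_mult2 sF sG sH)
    ultimately show "mexp I (\<lambda>x y. (\<theta>/s) * S x y) x y = mident I x y + (sin \<theta> / s) * S x y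
            + ((1 - cos \<theta>) / s^2) * mmult I S S x y"
      unfolding mexp_def t_def S2_def by (simp add: sums_iff)
  qed
qed



lemma UU_out: "x \<notin> Ar n \<or> y \<notin> Ar n \<Longrightarrow> UU n x y = 0"
  by (auto simp: UU_entry)

lemma U2:
  "mmult (Ar n) (UU n) (UU n) = (\<lambda>x y. mident (Ar n) x y
     - 2 / (real(n-1))^2 * SS n x y + 2 / (real(n-1))^2 * S2 n x y)"
proof (intro ext)
  fix x y
  show "mmult (Ar n) (UU n) (UU n) x y = mident (Ar n) x y
     - 2 / (real(n-1))^2 * SS n x y + 2 / (real(n-1))^2 * S2 n x y"
  proof (cases "x \<in> Ar n \<and> y \<in> Ar n")
    case True
    then obtain a b c d where "x = (a,b)" "y = (c,d)" by (cases x, cases y) auto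
    then show ?thesis using True U2_entry[of a b n c d] by simp
  next
    case False
    hence "x \<notin> Ar n \<or> y \<notin> Ar n" by blast
    thus ?thesis
      by (auto simp: mmult_def SS_out UU_out mident_def)
  qed
qed

lemma SS2_zero: "SS 2 x y = 0"
  by (cases x; cases y) (auto simp: SS_entry mem_Ar)

lemma main:
  fixes n :: nat
  assumes "n \<ge> 2"
  shows "\<exists>t::real.
    mmult (arcs (Kn_V n) Kn_E) (grover (real (n - 1)) (Kn_V n) Kn_E) (grover (real (n - 1)) (Kn_V n) Kn_E)
    = mexp (arcs (Kn_V n) Kn_E) (\<lambda>x y. t * skew (LD_adj (Kn_V n) Kn_E) x y)"
proof -
  define k where "k = real (n-1)"
  define q where "q = 2 / k^2"
  have k1: "k \<ge> 1" using assms by (simp add: k_def)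
  have LHS: "mmult (Ar n) (UU n) (UU n) = (\<lambda>x y. mident (Ar n) x y + (- q) * SS n x y + q * S2 n x y)"
    unfolding U2 q_def k_def by (simp add: fun_eq_iff)
  show ?thesis
  proof (cases "n = 2")
    case True
    have Z: "SS n x y = 0" for x y using True SS2_zero by simp
    have Z2: "S2 n x y = 0" for x y by (simp add: mmult_def Z)
    have "mexp (Ar n) (\<lambda>x y. (0/1) * SS n x y) = (\<lambda>x y. mident (Ar n) x y + (sin 0 / 1) * SS n x y
            + ((1 - cos 0) / 1^2) * S2 n x y)"
      by (rule mexp_formula) (auto simp: finite_Ar SS_out fun_eq_iff mmult_def Z)
    hence "mexp (Ar n) (\<lambda>x y. 0 * SS n x y) = mmult (Ar n) (UU n) (UU n)"
      by (simp add: LHS Z Z2)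
    thus ?thesis unfolding UU_def by metis
  next
    case False
    hence k2: "k \<ge> 2" using assms by (simp add: k_def)
    have "k^2 \<ge> 2^2" using k2 by (intro power_mono) auto
    hence cpos: "k^2 - 1 > 0" by simp
    define s where "s = sqrt (k^2 - 1)"
    have spos: "s > 0" using cpos by (simp add: s_def)
    have s2: "s^2 = k^2 - 1" using cpos by (simp add: s_def)
    have "(1 - q * s^2)^2 + (- q * s)^2 = 1"
    proof -
      have "k^2 = s^2 + 1" using s2 by simp
      hence qq: "q = 2 / (s^2 + 1)" by (simp add: q_def)
      have d: "s^2 + 1 \<noteq> 0" by (metis add_nonneg_pos zero_le_power2 zero_less_one less_irrefl)
      have "(1 - q * s^2)^2 + (- q * s)^2 = ((s^2+1 - 2*s^2)^2 + (2*s)^2) / (s^2+1)^2"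
        unfolding qq using d by (simp add: field_simps)
      also have "\<dots> = 1" using d by (simp add: field_simps) algebra
      finally show ?thesis .
    qed
    then obtain \<theta> where th: "1 - q * s^2 = cos \<theta>" "- q * s = sin \<theta>"
      using sincos_total_2pi_le by blast
    have "mexp (Ar n) (\<lambda>x y. (\<theta>/s) * SS n x y) = (\<lambda>x y. mident (Ar n) x y + (sin \<theta> / s) * SS n x y
            + ((1 - cos \<theta>) / s^2) * S2 n x y)"
      by (rule mexp_formula) (use spos in \<open>simp_all add: finite_Ar SS_out S3 s2 k_def\<close>)
    also have "\<dots> = mmult (Ar n) (UU n) (UU n)"
      unfolding LHS th[symmetric] using spos by (simp add: fun_eq_iff power2_eq_square)
    finally show ?thesis unfolding UU_def by metis
  qed
qed


theorem corollary6p2: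
  fixes n :: nat
  assumes "n \<ge> 2"
  shows "\<exists>t::real.
    mmult (arcs (Kn_V n) Kn_E) (grover (real (n - 1)) (Kn_V n) Kn_E) (grover (real (n - 1)) (Kn_V n) Kn_E)
    = mexp (arcs (Kn_V n) Kn_E) (\<lambda>x y. t * skew (LD_adj (Kn_V n) Kn_E) x y)"
  by (rule main[OF assms])

end
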